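(* Let $G=(V,E)$ be a finite connected graph, let $\varepsilon>0$ and $\rho\ge1$. There exist a vertex $v_0\in V$ and positive real numbers $(\omega_v)_{v\in V}$ such that: for every $v\in V\setminus\{v_0\}$ there is a neighbour $u$ of $v$ with $\omega_v\le\varepsilon\,\omega_u^\rho$; $\omega_{v_0}>1/2$; and $\sum_{v\in V}\omega_v=1$.
   Context: Two vertices $u,v$ are neighbours if $uv$ is an edge; a graph is connected if any two vertices are joined by a path of edges. *)

theory Defs
  imports Main Complex_Main
begin

definition finite_graph :: "'a set \<Rightarrow> ('a \<Rightarrow> 'a \<Rightarrow> bool) \<Rightarrow> bool" where
  "finite_graph V E \<longleftrightarrow> finite V \<and>
     (\<forall>u v. E u v \<longrightarrow> u \<in> V \<and> v \<in> V) \<and>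
     (\<forall>u v. E u v \<longrightarrow> E v u) \<and> (\<forall>v. \<not> E v v)"

definition connected_graph :: "'a set \<Rightarrow> ('a \<Rightarrow> 'a \<Rightarrow> bool) \<Rightarrow> bool" where
  "connected_graph V E \<longleftrightarrow> V \<noteq> {} \<and> (\<forall>u\<in>V. \<forall>v\<in>V. E\<^sup>*\<^sup>* u v)"

end

theory Submission
  imports Defs
begin

fun bseq :: "real \<Rightarrow> real \<Rightarrow> real \<Rightarrow> nat \<Rightarrow> real" where
  "bseq e r N 0 = 1/2"
| "bseq e r N (Suc k) = min (bseq e r N k) (e * bseq e r N k powr r) / N"

lemma bseq_pos: "e > 0 \<Longrightarrow> N \<ge> 1 \<Longrightarrow> bseq e r N k > 0"
  by (induction k) auto

lemma bseq_step: "e > 0 \<Longrightarrow> N \<ge> 1 \<Longrightarrow> bseq e r N (Suc k) \<le> bseq e r N k / N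
   \<and> bseq e r N (Suc k) \<le> e * bseq e r N k powr r"
proof -
  assume e: "e > 0" and N: "N \<ge> 1"
  have p: "bseq e r N k > 0" using bseq_pos[OF e N] .
  have m: "min (bseq e r N k) (e * bseq e r N k powr r) \<ge> 0" using p e by simp
  define X where "X = min (bseq e r N k) (e * bseq e r N k powr r)"
  have "X / N \<le> X"
    using m N unfolding X_def[symmetric] by (simp add: divide_le_eq mult_le_cancel_left1)
  moreover have "X / N \<le> bseq e r N k / N" using N unfolding X_def by (intro divide_right_mono) auto
  moreover have "X \<le> e * bseq e r N k powr r" unfolding X_def by simp
  ultimately show ?thesis unfolding X_def by simp
qed

lemma bseq_mono: "e > 0 \<Longrightarrow> N \<ge> 1 \<Longrightarrow> j \<le> k \<Longrightarrow> bseq e r N k \<le> bseq e r N j"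
proof (induction k)
  case 0 then show ?case by simp
next
  case (Suc k)
  have "bseq e r N (Suc k) \<le> bseq e r N k / N" using bseq_step[OF Suc.prems(1,2)] by blast
  also have "\<dots> \<le> bseq e r N k" using bseq_pos[OF Suc.prems(1,2)] Suc.prems(2)
    by (simp add: divide_le_eq)
  finally show ?case using Suc by (cases "j = Suc k") auto
qed

theorem lemma2p9:
  fixes V :: "'a set" and E :: "'a \<Rightarrow> 'a \<Rightarrow> bool" and \<epsilon> \<rho> :: real
  assumes "finite_graph V E" and "connected_graph V E"
    and "\<epsilon> > 0" and "\<rho> \<ge> 1"
  shows "\<exists>v0 \<in> V. \<exists>\<omega> :: 'a \<Rightarrow> real.
           (\<forall>v\<in>V. \<omega> v > 0) \<and>
           (\<forall>v\<in>V - {v0}. \<exists>u. E v u \<and> \<omega> v \<le> \<epsilon> * \<omega> u powr \<rho>) \<and>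
           \<omega> v0 > 1/2 \<and>
           (\<Sum>v\<in>V. \<omega> v) = 1"
proof -
  have fin: "finite V" and sym: "\<And>u v. E u v \<Longrightarrow> E v u"
    using assms(1) unfolding finite_graph_def by auto
  obtain v0 where v0: "v0 \<in> V" using assms(2) unfolding connected_graph_def by auto
  have conn: "\<And>v. v \<in> V \<Longrightarrow> \<exists>n. (E ^^ n) v0 v"
    using assms(2) v0 unfolding connected_graph_def by (metis rtranclp_power)
  define N :: real where "N = real (card V)"
  have N1: "N \<ge> 1" using fin v0 unfolding N_def
    by (metis One_nat_def card_gt_0_iff empty_iff less_eq_real_def of_nat_1 of_nat_le_iff Suc_leI)
  define b where "b = bseq \<epsilon> \<rho> N"
  have bpos: "\<And>k. b k > 0" unfolding b_def using bseq_pos[OF assms(3) N1] .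
  have bmono: "\<And>j k. j \<le> k \<Longrightarrow> b k \<le> b j" unfolding b_def using bseq_mono[OF assms(3) N1] .
  have bstep: "\<And>k. b (Suc k) \<le> \<epsilon> * b k powr \<rho>" unfolding b_def using bseq_step[OF assms(3) N1] by blast
  have b1: "b 1 \<le> 1 / (2*N)" unfolding b_def using bseq_step[OF assms(3) N1, where k=0] by simp
  define d where "d v = (LEAST n. (E ^^ n) v0 v)" for v
  have dI: "\<And>v. v \<in> V \<Longrightarrow> (E ^^ d v) v0 v" unfolding d_def using conn by (metis LeastI)
  have dle: "\<And>v n. (E ^^ n) v0 v \<Longrightarrow> d v \<le> n" unfolding d_def by (rule Least_le)
  have dpos: "\<And>v. v \<in> V \<Longrightarrow> v \<noteq> v0 \<Longrightarrow> d v \<ge> 1"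
    using dI by (metis One_nat_def Suc_leI gr0I relpowp.simps(1))
  define S where "S = (\<Sum>v\<in>V - {v0}. b (d v))"
  have "S \<le> real (card (V - {v0})) * (1/(2*N))"
    unfolding S_def
    by (rule sum_bounded_above) (use dpos bmono b1 in fastforce)
  also have "\<dots> = (N - 1) / (2*N)" proof -
    have "card V \<ge> 1" using v0 fin by (metis One_nat_def Suc_leI card_gt_0_iff empty_iff)
    then show ?thesis using v0 fin unfolding N_def by (simp add: of_nat_diff)
  qed
  also have "\<dots> < 1/2" using N1 by (simp add: field_simps)
  finally have S: "S < 1/2" .
  define \<omega> where "\<omega> v = (if v = v0 then 1 - S else b (d v))" for v
  have w0: "\<omega> v0 > 1/2" using S unfolding \<omega>_def by simp
  have wge: "\<And>u. \<omega> u \<ge> b (d u)"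
  proof -
    fix u show "\<omega> u \<ge> b (d u)"
    proof (cases "u = v0")
      case True
      have "b (d u) \<le> b 0" by (rule bmono) simp
      then show ?thesis using True w0 unfolding b_def \<omega>_def by simp
    next
      case False then show ?thesis unfolding \<omega>_def by simp
    qed
  qed
  show ?thesis
  proof (intro bexI[OF _ v0] exI[of _ \<omega>] conjI ballI)
    fix v assume "v \<in> V" then show "\<omega> v > 0" using w0 bpos unfolding \<omega>_def by auto
  next
    fix v assume v: "v \<in> V - {v0}"
    then obtain k where k: "d v = Suc k" using dpos by (metis DiffE insertI1 not0_implies_Suc le_numeral_extra(2) singletonD not_one_le_zero)
    have "(E ^^ Suc k) v0 v" using dI[of v] v k by auto
    then obtain u where u: "(E ^^ k) v0 u" "E u v" by auto
    have "d u \<le> k" using dle[OF u(1)] .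
    then have bu: "b k \<le> \<omega> u" using bmono wge by (meson order_trans)
    have "\<omega> v = b (Suc k)" using v k unfolding \<omega>_def by auto
    also have "\<dots> \<le> \<epsilon> * b k powr \<rho>" by (rule bstep)
    also have "\<dots> \<le> \<epsilon> * \<omega> u powr \<rho>"
      using bu bpos[of k] assms(3,4) by (intro mult_left_mono powr_mono2) auto
    finally show "\<exists>u. E v u \<and> \<omega> v \<le> \<epsilon> * \<omega> u powr \<rho>" using sym[OF u(2)] by blast
  next
    show "\<omega> v0 > 1/2" by (rule w0)
  next
    have "(\<Sum>v\<in>V. \<omega> v) = \<omega> v0 + (\<Sum>v\<in>V - {v0}. \<omega> v)" using fin v0 by (simp add: sum.remove)
    also have "(\<Sum>v\<in>V - {v0}. \<omega> v) = S" unfolding S_def \<omega>_def by (rule sum.cong) auto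
    finally show "(\<Sum>v\<in>V. \<omega> v) = 1" unfolding \<omega>_def by simp
  qed
qed

end
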